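(* Let $I$ be a prime ideal of $\mathbb{R}[x]=\mathbb{R}[x_1,\dots,x_n]$ such that $I'=\mathbb{C}[x]I$ is not prime in $\mathbb{C}[x]$. Then there exists an irreducible polynomial $g\in\mathbb{C}[x]\setminus I'$ such that $g\overline{g}\in I$.
   Context: $\mathbb{C}[x]I=\{\sum p_ih_i: p_i\in\mathbb{C}[x],h_i\in I\}$ is the ideal of $\mathbb{C}[x]$ generated by $I$. For $g=\sum_a g_a x^a\in\mathbb{C}[x]$, $\overline{g}=\sum_a\overline{g_a}x^a$ (coefficientwise complex conjugation). *)

theory Defs
  imports Complex_Main "HOL-Library.Poly_Mapping" "HOL-Computational_Algebra.Factorial_Ring"
begin

type_synonym ('v, 'a) mpoly = "('v \<Rightarrow>\<^sub>0 nat) \<Rightarrow>\<^sub>0 'a"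

definition is_ideal :: "'a::comm_ring_1 set \<Rightarrow> bool" where
  "is_ideal I \<longleftrightarrow> 0 \<in> I \<and> (\<forall>a\<in>I. \<forall>b\<in>I. a + b \<in> I) \<and> (\<forall>r a. a \<in> I \<longrightarrow> r * a \<in> I)"

definition prime_ideal :: "'a::comm_ring_1 set \<Rightarrow> bool" where
  "prime_ideal I \<longleftrightarrow> is_ideal I \<and> 1 \<notin> I \<and> (\<forall>a b. a * b \<in> I \<longrightarrow> a \<in> I \<or> b \<in> I)"

definition ideal_gen :: "'a::comm_ring_1 set \<Rightarrow> 'a set" where
  "ideal_gen S = {(\<Sum>i<m. p i * h i) | (m::nat) (p::nat \<Rightarrow> 'a) (h::nat \<Rightarrow> 'a). \<forall>i<m. h i \<in> S}"

definition complexify :: "('v, real) mpoly \<Rightarrow> ('v, complex) mpoly" where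
  "complexify f = Poly_Mapping.map complex_of_real f"

definition conj_poly :: "('v, complex) mpoly \<Rightarrow> ('v, complex) mpoly" where
  "conj_poly g = Poly_Mapping.map cnj g"

end

theory Submission
  imports Defs
begin


lemma lookup_mult_fin:
  fixes f g :: "'a::comm_monoid_add \<Rightarrow>\<^sub>0 'b::comm_semiring_0"
  assumes "finite A" "Poly_Mapping.keys f \<subseteq> A" "finite B" "Poly_Mapping.keys g \<subseteq> B"
  shows "Poly_Mapping.lookup (f * g) k = (\<Sum>(a,b)\<in>A \<times> B. if k = a + b then Poly_Mapping.lookup f a * Poly_Mapping.lookup g b else 0)"
proof -
  have "Poly_Mapping.lookup (f * g) k = prod_fun (Poly_Mapping.lookup f) (Poly_Mapping.lookup g) k"
    by (simp add: times_poly_mapping.rep_eq)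
  also have "\<dots> = (\<Sum>(a, b). Poly_Mapping.lookup f a * Poly_Mapping.lookup g b when k = a + b)"
    by (rule prod_fun_unfold_prod) auto
  also have "\<dots> = (\<Sum>(a,b)\<in>A \<times> B. Poly_Mapping.lookup f a * Poly_Mapping.lookup g b when k = a + b)"
  proof (rule Sum_any.expand_superset)
    show "finite (A \<times> B)" using assms by simp
    show "{ab. (case ab of (a, b) \<Rightarrow> Poly_Mapping.lookup f a * Poly_Mapping.lookup g b when k = a + b) \<noteq> 0} \<subseteq> A \<times> B"
      using assms by (auto simp: when_def in_keys_iff subset_iff split: if_splits dest!: mult_not_zero)
  qed
  finally show ?thesis by (simp add: when_def)
qed

lemma lookup_map0: "h 0 = 0 \<Longrightarrow> Poly_Mapping.lookup (Poly_Mapping.map h f) k = h (Poly_Mapping.lookup f k)"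
  by (simp add: map.rep_eq when_def)

lemma keys_map_sub: "Poly_Mapping.keys (Poly_Mapping.map h f) \<subseteq> Poly_Mapping.keys f"
  by (auto simp: in_keys_iff map.rep_eq when_def)

lemma complexify_mult: "complexify (f * g) = complexify f * complexify g"
proof (rule poly_mapping_eqI)
  fix k
  let ?A = "Poly_Mapping.keys f" and ?B = "Poly_Mapping.keys g"
  show "Poly_Mapping.lookup (complexify (f * g)) k = Poly_Mapping.lookup (complexify f * complexify g) k"
    unfolding complexify_def
    apply (subst lookup_mult_fin[of ?A _ ?B], simp_all add: keys_map_sub lookup_map0)
    apply (subst lookup_mult_fin[of ?A _ ?B], simp_all add: lookup_map0)
    apply (simp add: of_real_sum split_def lookup_map0 if_distrib cong: if_cong)
    done
qed

lemma conj_mult: "conj_poly (f * g) = conj_poly f * conj_poly g"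
proof (rule poly_mapping_eqI)
  fix k
  let ?A = "Poly_Mapping.keys f" and ?B = "Poly_Mapping.keys g"
  show "Poly_Mapping.lookup (conj_poly (f * g)) k = Poly_Mapping.lookup (conj_poly f * conj_poly g) k"
    unfolding conj_poly_def
    apply (subst lookup_mult_fin[of ?A _ ?B], simp_all add: keys_map_sub lookup_map0)
    apply (subst lookup_mult_fin[of ?A _ ?B], simp_all add: lookup_map0)
    apply (simp add: split_def lookup_map0 if_distrib cong: if_cong)
    done
qed



definition vlist :: "'v::finite list" where "vlist = (SOME xs. set xs = UNIV)"

lemma set_vlist: "set (vlist :: 'v::finite list) = UNIV"
  unfolding vlist_def by (rule someI_ex) (rule finite_list, simp)

definition Kmon :: "('v::finite \<Rightarrow>\<^sub>0 nat) \<Rightarrow> (nat \<Rightarrow>\<^sub>0 nat)" where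
  "Kmon m = Abs_poly_mapping (\<lambda>i. if i < length (vlist :: 'v list) then Poly_Mapping.lookup m (vlist ! i) else 0)"

lemma lookup_Kmon: "Poly_Mapping.lookup (Kmon (m::'v::finite \<Rightarrow>\<^sub>0 nat)) i = (if i < length (vlist :: 'v::finite list) then Poly_Mapping.lookup m (vlist ! i) else 0)"
proof -
  have fin: "finite {i. (if i < length (vlist :: 'v list) then Poly_Mapping.lookup m (vlist ! i) else 0) \<noteq> 0}"
    by (rule finite_subset[of _ "{..<length (vlist :: 'v list)}"]) (auto split: if_splits)
  show ?thesis unfolding Kmon_def by (simp only: lookup_Abs_poly_mapping[OF fin])
qed

lemma Kmon_add: "Kmon (a + b) = Kmon a + Kmon b"
  by (rule poly_mapping_eqI) (simp add: lookup_Kmon lookup_add)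

lemma Kmon_zero: "Kmon 0 = 0"
  by (rule poly_mapping_eqI) (simp add: lookup_Kmon)

lemma Kmon_inj: "Kmon (a::'a::finite \<Rightarrow>\<^sub>0 nat) = Kmon b \<Longrightarrow> a = b"
proof (rule poly_mapping_eqI)
  fix v assume "Kmon a = Kmon b"
  have "v \<in> set (vlist :: 'a list)" using set_vlist[where 'v='a] by simp
  then obtain i where i: "i < length (vlist :: 'a list)" "vlist ! i = v"
    by (auto simp: in_set_conv_nth)
  have "Poly_Mapping.lookup (Kmon a) i = Poly_Mapping.lookup (Kmon b) i" using \<open>Kmon a = Kmon b\<close> by simp
  then show "Poly_Mapping.lookup a v = Poly_Mapping.lookup b v" using i by (simp add: lookup_Kmon)
qed

lemma zero_le_pm: "(0::nat \<Rightarrow>\<^sub>0 nat) \<le> m"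
proof (cases "m = 0")
  case False
  then obtain k where k: "Poly_Mapping.lookup m k \<noteq> 0" by (auto simp: poly_mapping_eq_iff fun_eq_iff)
  define k0 where "k0 = (LEAST k. Poly_Mapping.lookup m k \<noteq> 0)"
  have "Poly_Mapping.lookup m k0 \<noteq> 0" unfolding k0_def by (rule LeastI[of _ k], rule k)
  moreover have "\<forall>k'<k0. Poly_Mapping.lookup m k' = 0" unfolding k0_def using not_less_Least by blast
  ultimately have "less_fun (Poly_Mapping.lookup 0) (Poly_Mapping.lookup m)"
    unfolding less_fun_def by (intro exI[of _ k0]) auto
  then show ?thesis by (simp add: less_eq_poly_mapping.rep_eq)
qed simp

definition lm :: "('v::finite, 'a::zero) mpoly \<Rightarrow> ('v \<Rightarrow>\<^sub>0 nat)" where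
  "lm f = inv_into (Poly_Mapping.keys f) Kmon (Max (Kmon ` Poly_Mapping.keys f))"

lemma lm_props:
  assumes "f \<noteq> 0"
  shows "lm f \<in> Poly_Mapping.keys f" "\<And>k. k \<in> Poly_Mapping.keys f \<Longrightarrow> Kmon k \<le> Kmon (lm f)"
proof -
  have ne: "Poly_Mapping.keys f \<noteq> {}" using assms by simp
  have inj: "inj_on Kmon (Poly_Mapping.keys f)" by (meson Kmon_inj inj_onI)
  have M: "Max (Kmon ` Poly_Mapping.keys f) \<in> Kmon ` Poly_Mapping.keys f"
    using ne by (intro Max_in) auto
  show lmk: "lm f \<in> Poly_Mapping.keys f" unfolding lm_def using M by (rule inv_into_into)
  have "Kmon (lm f) = Max (Kmon ` Poly_Mapping.keys f)" unfolding lm_def using M by (rule f_inv_into_f)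
  then show "\<And>k. k \<in> Poly_Mapping.keys f \<Longrightarrow> Kmon k \<le> Kmon (lm f)" by simp
qed



lemma lm_mult:
  fixes f g :: "('v::finite, 'a::idom) mpoly"
  assumes f: "f \<noteq> 0" and g: "g \<noteq> 0"
  shows "Poly_Mapping.lookup (f * g) (lm f + lm g) = Poly_Mapping.lookup f (lm f) * Poly_Mapping.lookup g (lm g)"
    and "\<And>k. k \<in> Poly_Mapping.keys (f * g) \<Longrightarrow> Kmon k \<le> Kmon (lm f + lm g)"
proof -
  let ?A = "Poly_Mapping.keys f" and ?B = "Poly_Mapping.keys g"
  note F = lm_props[OF f] and G = lm_props[OF g]
  have eq: "a = lm f \<and> b = lm g" if ab: "a \<in> ?A" "b \<in> ?B" and e: "lm f + lm g = a + b" for a b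
  proof -
    have ka: "Kmon a \<le> Kmon (lm f)" and kb: "Kmon b \<le> Kmon (lm g)" using F(2)[OF ab(1)] G(2)[OF ab(2)] .
    have s: "Kmon (lm f) + Kmon (lm g) = Kmon a + Kmon b" using e by (metis Kmon_add)
    have "Kmon a = Kmon (lm f)"
    proof (rule ccontr)
      assume "Kmon a \<noteq> Kmon (lm f)"
      with ka have "Kmon a < Kmon (lm f)" by (rule le_neq_trans)
      then have "Kmon a + Kmon b < Kmon (lm f) + Kmon (lm g)" using kb by (rule add_less_le_mono)
      with s show False by (metis less_irrefl)
    qed
    moreover from this s have "Kmon b = Kmon (lm g)" by (metis add_left_cancel)
    ultimately show "a = lm f \<and> b = lm g" using Kmon_inj by blast
  qed
  show "Poly_Mapping.lookup (f * g) (lm f + lm g) = Poly_Mapping.lookup f (lm f) * Poly_Mapping.lookup g (lm g)"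
  proof -
    have "Poly_Mapping.lookup (f * g) (lm f + lm g) = (\<Sum>(a,b)\<in>?A \<times> ?B. if lm f + lm g = a + b then Poly_Mapping.lookup f a * Poly_Mapping.lookup g b else 0)"
      by (rule lookup_mult_fin) (rule finite_keys subset_refl)+
    also have "\<dots> = (\<Sum>ab\<in>?A \<times> ?B. if ab = (lm f, lm g) then Poly_Mapping.lookup f (fst ab) * Poly_Mapping.lookup g (snd ab) else 0)"
    proof (rule sum.cong[OF refl])
      fix ab assume "ab \<in> ?A \<times> ?B"
      then obtain a b where abe: "ab = (a, b)" "a \<in> ?A" "b \<in> ?B" by auto
      show "(case ab of (a, b) \<Rightarrow> if lm f + lm g = a + b then Poly_Mapping.lookup f a * Poly_Mapping.lookup g b else 0) =
        (if ab = (lm f, lm g) then Poly_Mapping.lookup f (fst ab) * Poly_Mapping.lookup g (snd ab) else 0)"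
      proof (cases "lm f + lm g = a + b")
        case True
        then have ab': "a = lm f" "b = lm g" using eq abe by blast+
        then have pe: "ab = (lm f, lm g)" by (simp only: abe(1))
        show ?thesis unfolding if_P[OF pe] pe prod.case if_P[OF refl] fst_conv snd_conv ..
      next
        case False
        have neq: "ab \<noteq> (lm f, lm g)"
        proof
          assume "ab = (lm f, lm g)"
          then have "a = lm f" "b = lm g" using abe(1) by simp_all
          then show False using False by blast
        qed
        have neq': "(a, b) \<noteq> (lm f, lm g)" using neq unfolding abe(1) .
        show ?thesis unfolding abe(1) prod.case if_not_P[OF False] if_not_P[OF neq'] ..
      qed
    qed
    also have "\<dots> = Poly_Mapping.lookup f (lm f) * Poly_Mapping.lookup g (lm g)"
    proof -
      have mem: "(lm f, lm g) \<in> ?A \<times> ?B" using F(1) G(1) by blast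
      have fin: "finite (?A \<times> ?B)" by simp
      show ?thesis unfolding sum.delta[OF fin] if_P[OF mem] fst_conv snd_conv ..
    qed
    finally show ?thesis .
  qed
  fix k assume kk: "k \<in> Poly_Mapping.keys (f * g)"
  have nz: "Poly_Mapping.lookup (f * g) k \<noteq> 0" using kk by (simp add: in_keys_iff)
  have e: "Poly_Mapping.lookup (f * g) k = (\<Sum>(a,b)\<in>?A \<times> ?B. if k = a + b then Poly_Mapping.lookup f a * Poly_Mapping.lookup g b else 0)"
    by (rule lookup_mult_fin) (rule finite_keys subset_refl)+
  have "(\<Sum>(a,b)\<in>?A \<times> ?B. if k = a + b then Poly_Mapping.lookup f a * Poly_Mapping.lookup g b else 0) \<noteq> 0"
    using nz unfolding e .
  then obtain ab where ab1: "ab \<in> ?A \<times> ?B" and ab2: "(case ab of (a,b) \<Rightarrow> if k = a + b then Poly_Mapping.lookup f a * Poly_Mapping.lookup g b else 0) \<noteq> 0"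
    by (rule sum.not_neutral_contains_not_neutral)
  obtain a b where abe: "ab = (a, b)" by (cases ab)
  have ab: "a \<in> ?A" "b \<in> ?B" using ab1 unfolding abe(1) by blast+
  have kab: "k = a + b"
  proof (rule ccontr)
    assume nk: "k \<noteq> a + b"
    show False using ab2 unfolding abe(1) prod.case if_not_P[OF nk] by simp
  qed
  have "Kmon k = Kmon a + Kmon b" unfolding kab by (rule Kmon_add)
  also have "\<dots> \<le> Kmon (lm f) + Kmon (lm g)" by (rule add_mono[OF F(2)[OF ab(1)] G(2)[OF ab(2)]])
  also have "\<dots> = Kmon (lm f + lm g)" by (rule Kmon_add[symmetric])
  finally show "Kmon k \<le> Kmon (lm f + lm g)" .
qed

lemma lm_mult2:
  fixes f g :: "('v::finite, 'a::idom) mpoly"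
  assumes f: "f \<noteq> 0" and g: "g \<noteq> 0"
  shows "f * g \<noteq> 0" "lm (f * g) = lm f + lm g"
proof -
  have nz: "Poly_Mapping.lookup (f * g) (lm f + lm g) \<noteq> 0"
    using lm_mult(1)[OF f g] lm_props(1)[OF f] lm_props(1)[OF g] by (simp add: in_keys_iff)
  then show fg: "f * g \<noteq> 0" by auto
  have k: "lm f + lm g \<in> Poly_Mapping.keys (f * g)" using nz by (simp add: in_keys_iff)
  have "Kmon (lm (f * g)) \<le> Kmon (lm f + lm g)" by (rule lm_mult(2)[OF f g lm_props(1)[OF fg]])
  moreover have "Kmon (lm f + lm g) \<le> Kmon (lm (f * g))" by (rule lm_props(2)[OF fg k])
  ultimately show "lm (f * g) = lm f + lm g" by (intro Kmon_inj) simp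
qed

definition mu :: "('v::finite, 'a::zero) mpoly \<Rightarrow> nat" where
  "mu f = (\<Sum>v\<in>UNIV. Poly_Mapping.lookup (lm f) v)"

lemma mu_mult: "(f::('v::finite, 'a::idom) mpoly) \<noteq> 0 \<Longrightarrow> g \<noteq> 0 \<Longrightarrow> mu (f * g) = mu f + mu g"
  by (simp add: mu_def lm_mult2 lookup_add sum.distrib)

lemma mu_zero_unit:
  fixes d :: "('v::finite, 'a::field) mpoly"
  assumes d: "d \<noteq> 0" and m: "mu d = 0"
  shows "d dvd 1"
proof -
  have "\<forall>v. Poly_Mapping.lookup (lm d) v = 0" using m by (simp add: mu_def)
  then have l0: "lm d = 0" by (intro poly_mapping_eqI) simp
  have keys0: "k = 0" if "k \<in> Poly_Mapping.keys d" for k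
  proof -
    have "Kmon k \<le> 0" using lm_props(2)[OF d that] l0 by (simp add: Kmon_zero)
    with zero_le_pm[of "Kmon k"] have "Kmon k = Kmon 0" by (simp add: Kmon_zero)
    then show "k = 0" by (rule Kmon_inj)
  qed
  define c where "c = Poly_Mapping.lookup d 0"
  have dc: "d = Poly_Mapping.single 0 c"
  proof (rule poly_mapping_eqI)
    fix k show "Poly_Mapping.lookup d k = Poly_Mapping.lookup (Poly_Mapping.single 0 c) k"
      using keys0[of k] by (cases "k = 0") (auto simp: c_def in_keys_iff lookup_single)
  qed
  with d have "c \<noteq> 0" by auto
  then have "d * Poly_Mapping.single 0 (inverse c) = 1" by (simp add: dc mult_single)
  then show ?thesis by (metis dvdI)
qed



abbreviation cx :: "('v, real) mpoly \<Rightarrow> ('v, complex) mpoly" where "cx \<equiv> complexify"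

lemma lk_cx [simp]: "Poly_Mapping.lookup (complexify a) k = of_real (Poly_Mapping.lookup a k)"
  unfolding complexify_def by (simp add: lookup_map0)

lemma lk_cnj [simp]: "Poly_Mapping.lookup (conj_poly a) k = cnj (Poly_Mapping.lookup a k)"
  unfolding conj_poly_def by (simp add: lookup_map0)

lemma cx_add: "cx (a + b) = cx a + cx b"
  by (rule poly_mapping_eqI) (simp add: lookup_add)

lemma cx_minus: "cx (- a) = - cx a"
  by (rule poly_mapping_eqI) simp

lemma cx_diff: "cx (a - b) = cx a - cx b"
  by (rule poly_mapping_eqI) (simp add: lookup_minus)

lemma cx_0: "cx 0 = 0"
  by (rule poly_mapping_eqI) simp

lemma cx_1: "cx 1 = 1"
  by (rule poly_mapping_eqI) (simp add: lookup_one when_def)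

lemma cx_inj: "cx a = cx b \<Longrightarrow> a = b"
proof (rule poly_mapping_eqI)
  fix k assume "cx a = cx b"
  then have "Poly_Mapping.lookup (cx a) k = Poly_Mapping.lookup (cx b) k" by simp
  then show "Poly_Mapping.lookup a k = Poly_Mapping.lookup b k" by simp
qed

lemma conj_conj: "conj_poly (conj_poly x) = x"
  by (rule poly_mapping_eqI) simp

lemma conj_one: "conj_poly 1 = 1"
  by (rule poly_mapping_eqI) (simp add: lookup_one when_def)

definition iu :: "('v, complex) mpoly" where "iu = Poly_Mapping.single 0 \<i>"

lemma lk_iu_mult [simp]: "Poly_Mapping.lookup (iu * p) k = \<i> * Poly_Mapping.lookup p k"
  unfolding iu_def mult_map_scale_conv_mult[symmetric] by (simp add: lookup_map0)

lemma iu_sq: "iu * iu = (-1 :: ('v, complex) mpoly)"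
  unfolding iu_def by (simp add: mult_single single_uminus)

lemma decomp: "x = cx (Poly_Mapping.map Re x) + iu * cx (Poly_Mapping.map Im x)"
  by (rule poly_mapping_eqI) (simp add: lookup_add lookup_map0 complex_eq_iff)

lemma uniq:
  assumes "cx a + iu * cx b = cx c + iu * cx d"
  shows "a = c" "b = d"
proof -
  have "\<And>k. Poly_Mapping.lookup (cx a + iu * cx b) k = Poly_Mapping.lookup (cx c + iu * cx d) k"
    using assms by simp
  then have h: "\<And>k. complex_of_real (Poly_Mapping.lookup a k) + \<i> * Poly_Mapping.lookup b k
       = complex_of_real (Poly_Mapping.lookup c k) + \<i> * Poly_Mapping.lookup d k"
    by (simp add: lookup_add)
  show "a = c" by (rule poly_mapping_eqI) (use h in \<open>simp add: complex_eq_iff\<close>)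
  show "b = d" by (rule poly_mapping_eqI) (use h in \<open>simp add: complex_eq_iff\<close>)
qed

definition Nm :: "('v, complex) mpoly \<Rightarrow> ('v, real) mpoly" where
  "Nm x = Poly_Mapping.map Re (x * conj_poly x)"

lemma cx_Nm: "cx (Nm x) = x * conj_poly x"
proof -
  have c: "conj_poly (x * conj_poly x) = x * conj_poly x"
    by (simp add: conj_mult conj_conj mult.commute)
  show ?thesis
  proof (rule poly_mapping_eqI)
    fix k
    have "cnj (Poly_Mapping.lookup (x * conj_poly x) k) = Poly_Mapping.lookup (x * conj_poly x) k"
      using c by (metis lk_cnj)
    then have "Im (Poly_Mapping.lookup (x * conj_poly x) k) = 0" by (auto simp: complex_eq_iff)
    then show "Poly_Mapping.lookup (cx (Nm x)) k = Poly_Mapping.lookup (x * conj_poly x) k"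
      unfolding Nm_def by (simp add: lookup_map0 complex_eq_iff)
  qed
qed

lemma Nm_mult: "Nm (x * y) = Nm x * Nm y"
proof (rule cx_inj)
  show "cx (Nm (x * y)) = cx (Nm x * Nm y)"
    by (simp add: complexify_mult cx_Nm conj_mult ac_simps)
qed

lemma Nm_one: "Nm 1 = 1"
  by (rule cx_inj) (simp add: cx_Nm conj_one cx_1)



definition Sset :: "('v, real) mpoly set \<Rightarrow> ('v, complex) mpoly set" where
  "Sset I = {cx a + iu * cx b | a b. a \<in> I \<and> b \<in> I}"

lemma ideal_sum: "is_ideal I \<Longrightarrow> a \<in> I \<Longrightarrow> b \<in> I \<Longrightarrow> a + b \<in> I"
  unfolding is_ideal_def by blast
lemma ideal_mult: "is_ideal I \<Longrightarrow> a \<in> I \<Longrightarrow> r * a \<in> I"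
  unfolding is_ideal_def by blast
lemma ideal_0: "is_ideal I \<Longrightarrow> 0 \<in> I"
  unfolding is_ideal_def by blast
lemma ideal_neg: "is_ideal (I::'a::comm_ring_1 set) \<Longrightarrow> a \<in> I \<Longrightarrow> - a \<in> I"
  using ideal_mult[of I a "-1"] by simp
lemma ideal_diff: "is_ideal (I::'a::comm_ring_1 set) \<Longrightarrow> a \<in> I \<Longrightarrow> b \<in> I \<Longrightarrow> a - b \<in> I"
  using ideal_sum[of I a "-b"] ideal_neg[of I b] by simp

lemma cmul:
  fixes i :: "'a::comm_ring_1"
  assumes "i * i = -1"
  shows "(A + i * B) * (C + i * D) = (A * C - B * D) + i * (A * D + B * C)"
proof -
  have "(A + i * B) * (C + i * D) = A * C + i * (A * D + B * C) + (i * i) * (B * D)"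
    by (simp add: algebra_simps)
  also have "\<dots> = A * C + i * (A * D + B * C) + (-1) * (B * D)"
    by (simp only: assms)
  also have "\<dots> = (A * C - B * D) + i * (A * D + B * C)"
    by (simp add: algebra_simps)
  finally show ?thesis .
qed

context
  fixes I :: "('v::finite, real) mpoly set"
  assumes I: "is_ideal I"
begin

lemma S_0: "0 \<in> Sset I"
  unfolding Sset_def using ideal_0[OF I] by (auto intro!: exI[of _ 0] simp: cx_0)

lemma S_add: "x \<in> Sset I \<Longrightarrow> y \<in> Sset I \<Longrightarrow> x + y \<in> Sset I"
proof -
  assume "x \<in> Sset I" "y \<in> Sset I"
  then obtain a b c d where "x = cx a + iu * cx b" "y = cx c + iu * cx d" "a \<in> I" "b \<in> I" "c \<in> I" "d \<in> I"
    unfolding Sset_def by blast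
  then show "x + y \<in> Sset I" unfolding Sset_def
    by (intro CollectI exI[of _ "a + c"] exI[of _ "b + d"])
       (simp add: cx_add ideal_sum[OF I] algebra_simps)
qed

lemma S_mult: "x \<in> Sset I \<Longrightarrow> r * x \<in> Sset I"
proof -
  assume "x \<in> Sset I"
  then obtain a b where x: "x = cx a + iu * cx b" "a \<in> I" "b \<in> I"
    unfolding Sset_def by blast
  define u v where "u = Poly_Mapping.map Re r" and "v = Poly_Mapping.map Im r"
  have r: "r = cx u + iu * cx v" unfolding u_def v_def by (rule decomp)
  have "r * x = cx (u * a - v * b) + iu * cx (u * b + v * a)"
    unfolding r x(1) cx_diff cx_add complexify_mult
    by (rule cmul[OF iu_sq])
  moreover have "u * a - v * b \<in> I" "u * b + v * a \<in> I"
    using x by (auto intro!: ideal_diff[OF I] ideal_sum[OF I] ideal_mult[OF I])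
  ultimately show "r * x \<in> Sset I" unfolding Sset_def by blast
qed

lemma S_cx: "a \<in> I \<Longrightarrow> cx a \<in> Sset I"
proof -
  assume a: "a \<in> I"
  have "cx a = cx a + iu * cx 0 \<and> a \<in> I \<and> 0 \<in> I" using a ideal_0[OF I] by (simp add: cx_0)
  then show ?thesis unfolding Sset_def by blast
qed

lemma S_cx_iff: "cx r \<in> Sset I \<longleftrightarrow> r \<in> I"
proof
  assume "cx r \<in> Sset I"
  then obtain a b where "cx r = cx a + iu * cx b" "a \<in> I" unfolding Sset_def by blast
  then have "cx r + iu * cx 0 = cx a + iu * cx b" by (simp add: cx_0)
  then have "r = a" by (rule uniq)
  with \<open>a \<in> I\<close> show "r \<in> I" by simp
qed (rule S_cx)

lemma gen_eq: "ideal_gen (cx ` I) = Sset I"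
proof
  show "ideal_gen (cx ` I) \<subseteq> Sset I"
  proof
    fix z assume "z \<in> ideal_gen (cx ` I)"
    then obtain m :: nat and p h where z: "z = (\<Sum>i<m. p i * h i)" and h: "\<forall>i<m. h i \<in> cx ` I"
      unfolding ideal_gen_def by blast
    have "(\<Sum>i<n. p i * h i) \<in> Sset I" if "n \<le> m" for n
      using that
    proof (induction n)
      case 0 then show ?case using S_0 by simp
    next
      case (Suc n)
      then have "n < m" by simp
      then have "h n \<in> cx ` I" using h by blast
      then obtain y where "y \<in> I" "h n = cx y" by blast
      then have "h n \<in> Sset I" using S_cx by simp
      then show ?case using Suc by (simp add: S_add S_mult)
    qed
    then show "z \<in> Sset I" using z by simp
  qed
  show "Sset I \<subseteq> ideal_gen (cx ` I)"
  proof
    fix z assume "z \<in> Sset I"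
    then obtain a b where z: "z = cx a + iu * cx b" "a \<in> I" "b \<in> I" unfolding Sset_def by blast
    define p :: "nat \<Rightarrow> ('v, complex) mpoly" where "p = (\<lambda>i. if i = 0 then 1 else iu)"
    define h where "h = (\<lambda>i::nat. if i = 0 then cx a else cx b)"
    have "z = (\<Sum>i<2. p i * h i)" using z by (simp add: p_def h_def numeral_2_eq_2)
    moreover have "\<forall>i<2. h i \<in> cx ` I" using z by (simp add: h_def)
    ultimately show "z \<in> ideal_gen (cx ` I)" unfolding ideal_gen_def by blast
  qed
qed

end



theorem lemma3p4:
  fixes I :: "('v::finite, real) mpoly set"
  assumes "prime_ideal I"
    and "\<not> prime_ideal (ideal_gen (complexify ` I))"
  shows "\<exists>g :: ('v, complex) mpoly. irreducible g \<and> g \<notin> ideal_gen (complexify ` I)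
           \<and> g * conj_poly g \<in> complexify ` I"
proof -
  have I: "is_ideal I" and one: "1 \<notin> I" and pr: "\<And>a b. a * b \<in> I \<Longrightarrow> a \<in> I \<or> b \<in> I"
    using assms(1) unfolding prime_ideal_def by auto
  define J where "J = ideal_gen (cx ` I)"
  have J: "J = Sset I" unfolding J_def by (rule gen_eq[OF I])
  have Jid: "is_ideal J" unfolding J is_ideal_def using S_0[OF I] S_add[OF I] S_mult[OF I] by blast
  have oneJ: "1 \<notin> J" unfolding J using S_cx_iff[OF I, of 1] one by (simp add: cx_1)
  have Jmult: "x \<in> J \<Longrightarrow> x * r \<in> J" for x r
    unfolding J using S_mult[OF I, of x r] by (simp add: mult.commute)
  have NJ: "cx (Nm x) \<in> J \<longleftrightarrow> Nm x \<in> I" for x unfolding J by (rule S_cx_iff[OF I])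
  from assms(2) have "\<exists>a b. a * b \<in> J \<and> a \<notin> J \<and> b \<notin> J"
    using Jid oneJ unfolding prime_ideal_def J_def by blast
  then obtain a b where ab: "a * b \<in> J" "a \<notin> J" "b \<notin> J" by blast
  have "cx (Nm (a * b)) \<in> J" unfolding cx_Nm using Jmult[OF ab(1)] .
  then have "Nm a * Nm b \<in> I" using NJ Nm_mult by metis
  then have "Nm a \<in> I \<or> Nm b \<in> I" by (rule pr)
  then obtain a0 where a0: "a0 \<notin> J \<and> Nm a0 \<in> I" using ab by blast
  define P where "P = (\<lambda>x. x \<notin> J \<and> Nm x \<in> I)"
  obtain x where x: "P x" and xmin: "\<And>y. P y \<Longrightarrow> mu x \<le> mu y"
    using ex_has_least_nat[of P a0 mu] a0 unfolding P_def by blast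
  have xJ: "x \<notin> J" and xN: "Nm x \<in> I" using x unfolding P_def by auto
  have x0: "x \<noteq> 0" using xJ Jid unfolding is_ideal_def by auto
  have xunit: "\<not> x dvd 1"
  proof
    assume "x dvd 1"
    then obtain y where "1 = x * y" by (auto elim: dvdE)
    then have "Nm x * Nm y = 1" by (metis Nm_mult Nm_one)
    moreover have "Nm x * Nm y \<in> I" using xN ideal_mult[OF I xN, of "Nm y"] by (simp add: mult.commute)
    ultimately show False using one by simp
  qed
  have xirr: "c dvd 1 \<or> d dvd 1" if xcd: "x = c * d" for c d
  proof (rule ccontr)
    assume nu: "\<not> (c dvd 1 \<or> d dvd 1)"
    have c0: "c \<noteq> 0" and d0: "d \<noteq> 0" using x0 xcd by auto
    have mu: "mu x = mu c + mu d" using xcd mu_mult[OF c0 d0] by simp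
    have "Nm c * Nm d \<in> I" using xN xcd Nm_mult by metis
    then have "Nm c \<in> I \<or> Nm d \<in> I" by (rule pr)
    then show False
    proof
      assume "Nm c \<in> I"
      moreover have "c \<notin> J" using xJ xcd Jmult by auto
      ultimately have "mu x \<le> mu c" using xmin unfolding P_def by blast
      then have "mu d = 0" using mu by simp
      then show False using mu_zero_unit[OF d0] nu by blast
    next
      assume "Nm d \<in> I"
      moreover have "d \<notin> J" using xJ xcd Jmult by (metis mult.commute)
      ultimately have "mu x \<le> mu d" using xmin unfolding P_def by blast
      then have "mu c = 0" using mu by simp
      then show False using mu_zero_unit[OF c0] nu by blast
    qed
  qed
  have "irreducible x" unfolding irreducible_def using x0 xunit xirr by blast
  moreover have "x * conj_poly x \<in> complexify ` I" using xN cx_Nm[of x] by (metis image_eqI)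
  ultimately show ?thesis using xJ unfolding J_def by blast
qed

end
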